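(* $\chi(\operatorname{KG}(F_7))=3$, and $\chi(\operatorname{KG}(N))=5$ where $N$ is the non-Pappus matroid.
   Context: The matroid Kneser graph $\operatorname{KG}(M)$ has the bases of $M$ as vertices, two bases being adjacent when they are disjoint; $\chi$ is chromatic number. $F_7$ is the Fano matroid: rank $3$ on the $7$ points of the Fano plane, bases being the $3$-subsets that are not lines. The non-Pappus matroid $N$ is the rank-$3$ matroid on $\{1,\dots,9\}$ whose bases are the $3$-subsets other than the eight collinear triples $\{1,2,9\},\{4,6,7\},\{1,7,8\},\{1,4,5\},\{2,5,6\},\{6,8,9\},\{3,4,9\},\{2,3,7\}$ (the Pappus configuration with the line $\{3,5,8\}$ removed). *)

theory Defs
  imports Main
begin

text \<open>A rank-3 matroid given by its ground set and the set of collinear triples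
(dependent 3-subsets); its bases are the 3-subsets of the ground set that are not
among those triples.\<close>
definition rank3_bases :: "nat set \<Rightarrow> nat set set \<Rightarrow> nat set set" where
  "rank3_bases E L = {B. B \<subseteq> E \<and> card B = 3 \<and> B \<notin> L}"

text \<open>Matroid Kneser graph: vertices are the bases, adjacent iff disjoint.
A proper k-colouring of KG assigns colours in {..<k} to the bases such that
disjoint (adjacent) bases receive different colours.\<close>
definition kneser_colorable :: "'a set set \<Rightarrow> nat \<Rightarrow> bool" where
  "kneser_colorable \<B> k \<longleftrightarrow>
     (\<exists>c. (\<forall>B\<in>\<B>. c B < k) \<and>
          (\<forall>B1\<in>\<B>. \<forall>B2\<in>\<B>. B1 \<inter> B2 = {} \<longrightarrow> c B1 \<noteq> c B2))"

definition kneser_chromatic_number :: "'a set set \<Rightarrow> nat" where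
  "kneser_chromatic_number \<B> = (LEAST k. kneser_colorable \<B> k)"

definition fano_lines :: "nat set set" where
  "fano_lines = {{1,2,3},{1,4,5},{1,6,7},{2,4,6},{2,5,7},{3,4,7},{3,5,6}}"

definition F7_bases :: "nat set set" where
  "F7_bases = rank3_bases {1..7} fano_lines"

definition nonpappus_lines :: "nat set set" where
  "nonpappus_lines = {{1,2,9},{4,6,7},{1,7,8},{1,4,5},{2,5,6},{6,8,9},{3,4,9},{2,3,7}}"

definition N_bases :: "nat set set" where
  "N_bases = rank3_bases {1..9} nonpappus_lines"

end

theory Submission imports Defs begin

lemma kc_mono:
  assumes "kneser_colorable B k" "k \<le> k'"
  shows "kneser_colorable B k'"
  using assms unfolding kneser_colorable_def by (meson order_less_le_trans)

lemma kcn_eq: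
  assumes "kneser_colorable B k" "\<not> kneser_colorable B (k - 1)" "k > 0"
  shows "kneser_chromatic_number B = k"
  unfolding kneser_chromatic_number_def
proof (rule Least_equality)
  show "kneser_colorable B k" by fact
  fix y assume "kneser_colorable B y"
  show "k \<le> y"
  proof (rule ccontr)
    assume "\<not> k \<le> y"
    then have "y \<le> k - 1" by simp
    with \<open>kneser_colorable B y\<close> have "kneser_colorable B (k - 1)" by (rule kc_mono)
    with assms(2) show False by simp
  qed
qed

section \<open>Search certificates\<close>

datatype ctree = Lf nat | Nd nat "ctree list"

definition assign :: "nat list list \<Rightarrow> nat \<Rightarrow> nat \<Rightarrow> nat list list \<Rightarrow> nat list list" where
  "assign A v x D = fold (\<lambda>u D'. D'[u := removeAll x (D'!u)]) (A!v) (D[v := [x]])"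

fun check :: "nat list list \<Rightarrow> ctree \<Rightarrow> nat list list \<Rightarrow> bool"
and checks :: "nat list list \<Rightarrow> nat \<Rightarrow> nat list \<Rightarrow> ctree list \<Rightarrow> nat list list \<Rightarrow> bool" where
  "check A (Lf v) D = (v < length D \<and> D!v = [])"
| "check A (Nd v ts) D = (v < length D \<and> checks A v (D!v) ts D)"
| "checks A v [] [] D = True"
| "checks A v (x#xs) (t#ts) D = (check A t (assign A v x D) \<and> checks A v xs ts D)"
| "checks A v _ _ D = False"

definition cons_ok :: "(nat \<Rightarrow> nat) \<Rightarrow> nat list list \<Rightarrow> bool" where
  "cons_ok g D \<longleftrightarrow> (\<forall>w<length D. g w \<in> set (D!w))"

definition proper :: "nat list list \<Rightarrow> (nat \<Rightarrow> nat) \<Rightarrow> nat \<Rightarrow> bool" where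
  "proper A g n \<longleftrightarrow> (\<forall>v<n. \<forall>u\<in>set (A!v). u < n \<longrightarrow> g u \<noteq> g v)"

lemma fold_ok:
  assumes "cons_ok g D" "\<forall>u\<in>set us. u < length D \<longrightarrow> g u \<noteq> x"
  shows "cons_ok g (fold (\<lambda>u D'. D'[u := removeAll x (D'!u)]) us D)
         \<and> length (fold (\<lambda>u D'. D'[u := removeAll x (D'!u)]) us D) = length D"
  using assms
proof (induction us arbitrary: D)
  case Nil then show ?case by simp
next
  case (Cons u us)
  have "cons_ok g (D[u := removeAll x (D!u)])"
  proof (unfold cons_ok_def, intro allI impI)
    fix w assume "w < length (D[u := removeAll x (D!u)])"
    then show "g w \<in> set (D[u := removeAll x (D!u)] ! w)"
      using Cons.prems unfolding cons_ok_def by (cases "w = u") auto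
  qed
  moreover have "\<forall>u\<in>set us. u < length (D[u := removeAll x (D!u)]) \<longrightarrow> g u \<noteq> x"
    using Cons.prems by simp
  ultimately show ?case using Cons.IH by simp
qed

lemma assign_ok:
  assumes "cons_ok g D" "proper A g (length D)" "g v = x" "v < length D"
  shows "cons_ok g (assign A v x D) \<and> length (assign A v x D) = length D"
proof -
  have c1: "cons_ok g (D[v := [x]])"
    using assms unfolding cons_ok_def by (auto simp: nth_list_update)
  have "\<forall>u\<in>set (A!v). u < length (D[v := [x]]) \<longrightarrow> g u \<noteq> x"
    using assms unfolding proper_def by auto
  from fold_ok[OF c1 this] show ?thesis unfolding assign_def by simp
qed

lemma check_sound:
  shows "check A t D \<Longrightarrow> cons_ok g D \<Longrightarrow> proper A g (length D) \<Longrightarrow> False"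
    and "checks A v xs ts D \<Longrightarrow> cons_ok g D \<Longrightarrow> proper A g (length D) \<Longrightarrow> v < length D
      \<Longrightarrow> g v \<in> set xs \<Longrightarrow> False"
proof (induction A t D and A v xs ts D rule: check_checks.induct)
  case (1 A v D)
  then show ?case unfolding cons_ok_def by force
next
  case (2 A v ts D)
  then show ?case unfolding cons_ok_def by auto
next
  case (3 A v D)
  then show ?case by simp
next
  case (4 A v x xs t ts D)
  show False
  proof (cases "g v = x")
    case True
    from assign_ok[OF "4.prems"(2) "4.prems"(3) True "4.prems"(4)] have "cons_ok g (assign A v x D)"
      and "proper A g (length (assign A v x D))" using "4.prems"(3) by auto
    with "4.IH"(1) "4.prems"(1) show False by simp
  next
    case False
    with "4.IH"(2) "4.prems" show False by simp
  qed
qed auto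

lemma check_sound':
  assumes "check A t D" "cons_ok g D" "proper A g (length D)"
  shows False
  using check_sound(1)[of A t D g] assms by blast

section \<open>Data for the non-Pappus matroid\<close>

definition Vs :: "nat list list" where "Vs = [[1, 2, 4], [5, 6, 7], [3, 8, 9], [1, 2, 6], [1, 2, 8], [1, 3, 5], [1, 3, 6], [1, 3, 9], [1, 4, 7], [1, 4, 9], [1, 5, 6], [1, 5, 7], [1, 5, 9], [1, 6, 7], [1, 6, 8], [1, 6, 9], [1, 8, 9], [2, 3, 4], [2, 3, 6], [2, 3, 8], [2, 3, 9], [2, 4, 6], [2, 4, 7], [2, 6, 7], [2, 7, 8], [3, 4, 5], [3, 4, 6], [3, 5, 8], [3, 6, 8], [3, 6, 9], [4, 5, 6], [4, 5, 7], [4, 5, 9], [4, 6, 9], [4, 7, 9], [4, 8, 9], [5, 7, 8], [5, 8, 9], [6, 7, 9]]"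
definition Aadj :: "nat list list" where "Aadj = [[1, 2, 27, 28, 29, 36, 37, 38], [0, 2, 4, 7, 9, 16, 17, 19, 20, 35], [0, 1, 3, 8, 10, 11, 13, 21, 22, 23, 30, 31], [2, 25, 27, 31, 32, 34, 35, 36, 37], [1, 25, 26, 29, 30, 31, 32, 33, 34, 38], [21, 22, 23, 24, 33, 34, 35, 38], [22, 24, 31, 32, 34, 35, 36, 37], [1, 21, 22, 23, 24, 30, 31, 36], [2, 18, 19, 20, 27, 28, 29, 37], [1, 18, 19, 23, 24, 27, 28, 36], [2, 17, 19, 20, 22, 24, 34, 35], [2, 17, 18, 19, 20, 21, 26, 28, 29, 33, 35], [17, 18, 19, 21, 22, 23, 24, 26, 28], [2, 17, 19, 20, 25, 27, 32, 35, 37], [17, 20, 22, 25, 31, 32, 34], [17, 19, 22, 24, 25, 27, 31, 36], [1, 17, 18, 21, 22, 23, 25, 26, 30, 31], [1, 10, 11, 12, 13, 14, 15, 16, 36, 37, 38], [8, 9, 11, 12, 16, 31, 32, 34, 35, 36, 37], [1, 8, 9, 10, 11, 12, 13, 15, 30, 31, 32, 33, 34, 38], [1, 8, 10, 11, 13, 14, 30, 31, 36], [2, 5, 7, 11, 12, 16, 27, 36, 37], [2, 5, 6, 7, 10, 12, 14, 15, 16, 27, 28, 29, 37], [2, 5, 7, 9, 12, 16, 25, 27, 32, 35, 37], [5, 6, 7, 9, 10, 12, 15, 25, 26, 29, 30, 32, 33], [3, 4, 13, 14, 15, 16, 23, 24, 38], [4, 11, 12, 16, 24, 36, 37], [0,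 3, 8, 9, 13, 15, 21, 22, 23, 33, 34, 38], [0, 8, 9, 11, 12, 22, 31, 32, 34], [0, 4, 8, 11, 22, 24, 31, 36], [2, 4, 7, 16, 19, 20, 24], [2, 3, 4, 6, 7, 14, 15, 16, 18, 19, 20, 28, 29], [3, 4, 6, 13, 14, 18, 19, 23, 24, 28], [4, 5, 11, 19, 24, 27, 36], [3, 4, 5, 6, 10, 14, 18, 19, 27, 28], [1, 3, 5, 6, 10, 11, 13, 18, 23], [0, 3, 6, 7, 9, 15, 17, 18, 20, 21, 26, 29, 33], [0, 3, 6, 8, 13, 17, 18, 21, 22, 23, 26], [0, 4, 5, 17, 19, 25, 27]]"
definition Tr :: ctree where "Tr = Nd 19 [(Nd 31 [(Nd 11 [(Nd 3 [(Nd 13 [(Nd 27 [(Nd 9 [(Nd 28 [(Nd 32 [(Nd 15 [(Nd 25 [(Nd 4 [(Nd 14 [(Nd 22 [(Nd 17 [(Nd 36 [(Nd 37 [(Nd 12 [(Nd 21 [(Nd 16 [(Nd 8 [(Nd 10 [(Nd 34 [(Nd 20 [(Nd 35 [(Nd 18 [(Nd 5 [(Lf 33)])])])])])])])])])])])])])])])])])])])])]), (Nd 21 [(Nd 8 [(Nd 9 [(Nd 28 [(Nd 32 [(Nd 15 [(Nd 25 [(Nd 4 [(Nd 16 [(Nd 14 [(Nd 22 [(Nd 17 [(Lf 10)])])])])])])])])])])])])]), (Nd 35 [(Nd 27 [(Nd 8 [(Nd 18 [(Nd 28 [(Nd 32 [(Nd 34 [(Nd 6 [(Nd 22 [(Nd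 16 [(Nd 17 [(Nd 12 [(Nd 25 [(Nd 9 [(Nd 24 [(Lf 15)])])])])])])])])])])])])]), (Nd 9 [(Nd 18 [(Nd 28 [(Nd 32 [(Nd 23 [(Nd 15 [(Nd 33 [(Nd 5 [(Nd 22 [(Nd 34 [(Lf 6)])])])])])])])])])])])])]), (Nd 36 [(Nd 27 [(Nd 34 [(Nd 13 [(Nd 28 [(Lf 8)])])]), (Nd 34 [(Nd 9 [(Nd 28 [(Nd 32 [(Nd 23 [(Nd 13 [(Nd 35 [(Nd 18 [(Nd 5 [(Lf 33)])])])])])])])])])]), (Nd 9 [(Nd 18 [(Nd 28 [(Nd 32 [(Nd 23 [(Nd 34 [(Nd 27 [(Nd 13 [(Nd 17 [(Nd 20 [(Nd 35 [(Nd 5 [(Lf 33)])])])])])])])])])])])])])]), (Nd 28 [(Nd 9 [(Nd 29 [(Nd 36 [(Nd 21 [(Nd 33 [(Nd 27 [(Nd 23 [(Nd 34 [(Nd 4 [(Nd 3 [(Nd 13 [(Nd 32 [(Nd 24 [(Nd 35 [(Lf 6)])])])])])])])])])])])])])])])]), (Nd 11 [(Nd 28 [(Nd 9 [(Nd 29 [(Nd 36 [(Nd 4 [(Nd 3 [(Nd 15 [(Nd 27 [(Nd 23 [(Nd 16 [(Nd 18 [(Nd 34 [(Nd 13 [(Nd 17 [(Nd 32 [(Nd 24 [(Nd 25 [(Nd 35 [(Lf 6)])])])])])])])])])])])])])])])])])]), (Nd 17 [(Nd 16 [(Nd 18 [(Nd 35 [(Nd 4 [(Nd 26 [(Nd 36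 [(Nd 20 [(Nd 7 [(Nd 21 [(Nd 9 [(Nd 24 [(Nd 27 [(Nd 23 [(Nd 32 [(Nd 12 [(Nd 22 [(Lf 15)])])])])])])])])])]), (Nd 9 [(Nd 28 [(Nd 8 [(Nd 27 [(Nd 37 [(Nd 3 [(Nd 13 [(Nd 32 [(Nd 21 [(Nd 25 [(Lf 14)])])])])])])])])])])])]), (Nd 29 [(Nd 8 [(Nd 33 [(Nd 27 [(Nd 9 [(Nd 36 [(Nd 20 [(Nd 7 [(Nd 22 [(Nd 24 [(Nd 23 [(Lf 12)])])])])])])])])])])])])]), (Nd 8 [(Nd 37 [(Nd 36 [(Nd 20 [(Nd 7 [(Nd 21 [(Nd 27 [(Nd 34 [(Nd 9 [(Nd 23 [(Nd 10 [(Nd 22 [(Nd 24 [(Lf 12)])])])])])])])])])]), (Nd 9 [(Nd 27 [(Nd 3 [(Nd 13 [(Nd 32 [(Nd 4 [(Nd 21 [(Nd 25 [(Lf 14)])])])])])])])])])])])])]), (Nd 16 [(Nd 21 [(Nd 36 [(Nd 37 [(Nd 22 [(Lf 15)])])])])])])])]), (Nd 9 [(Nd 23 [(Nd 27 [(Nd 37 [(Nd 17 [(Nd 12 [(Nd 18 [(Nd 11 [(Nd 22 [(Nd 24 [(Nd 6 [(Nd 31 [(Nd 36 [(Lf 20)])])]), (Nd 5 [(Nd 34 [(Nd 7 [(Nd 31 [(Nd 36 [(Lf 20)])])])])])]), (Nd 28 [(Nd 10 [(Nd 34 [(Nd 6 [(Nd 31 [(Nd 36 [(Lf 20)])])])])])])])])])]),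 (Nd 12 [(Nd 38 [(Nd 22 [(Nd 10 [(Nd 15 [(Nd 31 [(Nd 18 [(Nd 32 [(Nd 34 [(Nd 3 [(Nd 13 [(Nd 25 [(Lf 14)])])])])])]), (Nd 18 [(Nd 36 [(Lf 20)])])])])]), (Nd 36 [(Nd 18 [(Nd 32 [(Lf 6)])]), (Nd 7 [(Nd 29 [(Nd 31 [(Nd 11 [(Lf 20)])])])])])])])])]), (Nd 22 [(Nd 12 [(Nd 24 [(Nd 6 [(Nd 10 [(Nd 35 [(Nd 3 [(Nd 36 [(Lf 15)])])])])]), (Nd 5 [(Nd 6 [(Nd 34 [(Nd 3 [(Nd 7 [(Nd 31 [(Nd 36 [(Nd 17 [(Nd 18 [(Nd 11 [(Lf 20)])])])])])])])])])])])]), (Nd 17 [(Nd 12 [(Nd 13 [(Nd 28 [(Nd 10 [(Nd 15 [(Nd 24 [(Nd 31 [(Nd 3 [(Nd 36 [(Lf 6)])]), (Nd 18 [(Nd 36 [(Nd 16 [(Nd 3 [(Lf 35)])])])])]), (Nd 25 [(Nd 3 [(Nd 31 [(Lf 6)])])])])])])])])]), (Nd 36 [(Nd 18 [(Nd 3 [(Nd 32 [(Nd 21 [(Nd 16 [(Nd 31 [(Nd 12 [(Nd 25 [(Nd 24 [(Nd 4 [(Lf 30)])])])])])])])])])]), (Nd 15 [(Nd 29 [(Nd 24 [(Nd 33 [(Nd 4 [(Nd 31 [(Nd 18 [(Nd 32 [(Lf 3)])])])])]), (Nd 32 [(Nd 4 [(Nd 31 [(Lf 3)])])])])])])])])])]),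 (Nd 38 [(Nd 22 [(Nd 12 [(Nd 15 [(Nd 24 [(Nd 5 [(Nd 7 [(Nd 31 [(Nd 36 [(Nd 17 [(Nd 18 [(Nd 11 [(Lf 20)])])])])])])])])])]), (Nd 15 [(Nd 31 [(Nd 3 [(Nd 32 [(Nd 18 [(Nd 37 [(Nd 17 [(Nd 34 [(Nd 28 [(Nd 35 [(Nd 10 [(Nd 14 [(Nd 24 [(Nd 33 [(Nd 11 [(Nd 4 [(Nd 21 [(Nd 16 [(Lf 25)])])])])]), (Nd 25 [(Nd 16 [(Nd 21 [(Nd 36 [(Lf 29)])])])])])])])])])])])])])])]), (Nd 28 [(Nd 29 [(Nd 4 [(Nd 32 [(Nd 24 [(Lf 33)])])])])])])])])])]), (Nd 27 [(Nd 38 [(Nd 22 [(Nd 16 [(Nd 17 [(Nd 12 [(Nd 18 [(Nd 11 [(Nd 34 [(Nd 4 [(Nd 3 [(Nd 13 [(Nd 7 [(Nd 24 [(Lf 15)])])])])])])])])])])]), (Nd 15 [(Nd 17 [(Nd 37 [(Nd 16 [(Nd 21 [(Nd 36 [(Nd 29 [(Nd 4 [(Nd 32 [(Nd 24 [(Lf 33)])])])])])])])])])])])]), (Nd 37 [(Nd 22 [(Nd 16 [(Nd 18 [(Nd 12 [(Nd 7 [(Nd 24 [(Nd 36 [(Lf 15)])])])])])]), (Nd 18 [(Nd 16 [(Nd 21 [(Nd 36 [(Nd 35 [(Nd 11 [(Nd 3 [(Nd 31 [(Nd 13 [(Nd 17 [(Nd 28 [(Nd 6 [(Nd 10 [(Nd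 24 [(Nd 34 [(Lf 14)])])])])])])])])])])])])])]), (Nd 8 [(Nd 31 [(Nd 16 [(Nd 3 [(Nd 6 [(Nd 36 [(Lf 15)])])])]), (Nd 28 [(Nd 15 [(Nd 29 [(Nd 36 [(Nd 24 [(Nd 32 [(Nd 4 [(Nd 3 [(Nd 12 [(Nd 13 [(Nd 17 [(Lf 14)])])])])])]), (Nd 33 [(Nd 11 [(Nd 4 [(Nd 38 [(Nd 25 [(Nd 16 [(Nd 21 [(Nd 5 [(Nd 35 [(Nd 3 [(Nd 13 [(Nd 17 [(Nd 20 [(Nd 6 [(Nd 10 [(Nd 34 [(Lf 14)])])])])])])])])])])])])])])])])])])])])])])])])]), (Nd 17 [(Nd 16 [(Nd 12 [(Nd 18 [(Nd 11 [(Nd 22 [(Nd 7 [(Nd 24 [(Nd 36 [(Lf 6)])])]), (Nd 28 [(Nd 10 [(Nd 34 [(Nd 6 [(Nd 31 [(Nd 36 [(Lf 7)])])])])])])])])])])]), (Nd 38 [(Nd 36 [(Nd 18 [(Nd 15 [(Nd 31 [(Nd 25 [(Nd 16 [(Nd 21 [(Nd 14 [(Nd 32 [(Nd 24 [(Lf 26)])])])])])])])])]), (Nd 7 [(Nd 22 [(Nd 12 [(Nd 10 [(Nd 20 [(Nd 31 [(Nd 18 [(Nd 34 [(Nd 35 [(Nd 5 [(Nd 15 [(Nd 25 [(Nd 16 [(Nd 29 [(Nd 24 [(Lf 30)])])])])])])])])])])])])]), (Nd 29 [(Nd 31 [(Nd 11 [(Lf 20)])])])])])])])])])])]), (Nd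 36 [(Nd 27 [(Nd 23 [(Nd 38 [(Nd 22 [(Nd 15 [(Nd 31 [(Nd 18 [(Nd 4 [(Nd 16 [(Nd 3 [(Lf 35)])])])]), (Nd 28 [(Nd 17 [(Nd 13 [(Nd 32 [(Nd 35 [(Nd 18 [(Nd 34 [(Lf 6)])])])])]), (Nd 16 [(Nd 21 [(Nd 14 [(Nd 32 [(Nd 34 [(Nd 18 [(Nd 4 [(Nd 3 [(Lf 35)])])])])])])])])])])])]), (Nd 16 [(Nd 17 [(Lf 15)])])])])]), (Nd 18 [(Nd 31 [(Nd 28 [(Nd 11 [(Nd 23 [(Nd 16 [(Nd 17 [(Nd 15 [(Nd 25 [(Nd 13 [(Nd 32 [(Nd 35 [(Nd 38 [(Nd 5 [(Nd 22 [(Nd 34 [(Lf 6)])])])])])])])])]), (Nd 12 [(Nd 15 [(Nd 22 [(Nd 24 [(Lf 7)])])])])]), (Nd 21 [(Nd 22 [(Nd 15 [(Nd 17 [(Nd 32 [(Nd 13 [(Nd 35 [(Nd 6 [(Nd 34 [(Nd 5 [(Nd 10 [(Nd 33 [(Nd 24 [(Nd 25 [(Lf 38)])])])])])])])])]), (Nd 3 [(Nd 13 [(Nd 25 [(Lf 14)])])])]), (Nd 14 [(Nd 32 [(Nd 34 [(Nd 10 [(Nd 35 [(Nd 5 [(Nd 6 [(Nd 37 [(Nd 8 [(Nd 29 [(Nd 24 [(Lf 33)])])])])])])])])])])])])]), (Nd 12 [(Nd 17 [(Nd 10 [(Nd 34 [(Nd 35 [(Nd 5 [(Nd 15 [(Nd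 33 [(Nd 38 [(Nd 25 [(Nd 24 [(Nd 4 [(Lf 32)])])])])])])])])])]), (Nd 37 [(Nd 3 [(Nd 8 [(Nd 32 [(Nd 13 [(Nd 24 [(Nd 6 [(Nd 35 [(Lf 10)])]), (Nd 25 [(Nd 5 [(Lf 38)])])])]), (Nd 14 [(Nd 4 [(Nd 26 [(Nd 30 [(Nd 24 [(Nd 6 [(Nd 35 [(Lf 10)])])])])]), (Nd 25 [(Nd 13 [(Nd 29 [(Nd 26 [(Nd 24 [(Nd 5 [(Lf 38)])])])])])])])])])])])])])])])])]), (Nd 32 [(Nd 3 [(Nd 12 [(Nd 21 [(Nd 22 [(Nd 6 [(Nd 37 [(Nd 35 [(Nd 5 [(Nd 8 [(Nd 10 [(Nd 24 [(Nd 34 [(Nd 15 [(Nd 25 [(Lf 14)])])])])])])])])])]), (Nd 17 [(Nd 13 [(Nd 10 [(Nd 34 [(Nd 35 [(Nd 5 [(Nd 6 [(Nd 15 [(Nd 25 [(Lf 14)])])])])])])])]), (Nd 37 [(Nd 16 [(Nd 25 [(Nd 4 [(Nd 8 [(Nd 14 [(Nd 26 [(Nd 30 [(Nd 24 [(Nd 6 [(Nd 35 [(Lf 10)])])])])])])])])])])])])])])])])])]), (Nd 21 [(Nd 35 [(Nd 29 [(Nd 33 [(Nd 24 [(Nd 4 [(Lf 32)])])])])])])])]), (Nd 16 [(Nd 3 [(Nd 15 [(Nd 17 [(Nd 11 [(Nd 12 [(Nd 22 [(Nd 24 [(Lf 29)])])])])])])])])]), (Nd 23 [(Nd 16 [(Nd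 21 [(Nd 35 [(Nd 11 [(Nd 3 [(Nd 31 [(Nd 28 [(Nd 22 [(Nd 6 [(Nd 10 [(Nd 24 [(Nd 34 [(Nd 15 [(Nd 14 [(Nd 17 [(Nd 13 [(Lf 25)])])])])])])])]), (Nd 37 [(Nd 12 [(Nd 5 [(Nd 10 [(Nd 24 [(Nd 17 [(Nd 32 [(Nd 25 [(Nd 4 [(Lf 30)])])])])])])])])])])])])])])])])]), (Nd 37 [(Nd 3 [(Nd 32 [(Nd 21 [(Nd 16 [(Nd 31 [(Nd 12 [(Nd 25 [(Nd 4 [(Nd 28 [(Nd 35 [(Nd 11 [(Nd 5 [(Nd 14 [(Nd 22 [(Nd 17 [(Nd 10 [(Nd 24 [(Lf 30)])])])])])])])])])])])])])])])])])])])])]), (Nd 27 [(Nd 23 [(Nd 7 [(Nd 22 [(Nd 21 [(Nd 15 [(Nd 17 [(Nd 13 [(Nd 32 [(Nd 18 [(Nd 31 [(Nd 34 [(Lf 6)])])])])])])])])])])]), (Nd 17 [(Nd 11 [(Nd 18 [(Nd 28 [(Nd 29 [(Nd 31 [(Nd 8 [(Nd 15 [(Nd 22 [(Nd 6 [(Nd 37 [(Nd 32 [(Nd 23 [(Nd 34 [(Nd 13 [(Nd 20 [(Nd 35 [(Nd 5 [(Nd 21 [(Nd 7 [(Nd 10 [(Nd 30 [(Nd 33 [(Nd 24 [(Nd 4 [(Nd 25 [(Lf 38)])])])])])])])])])])])])])])])])]), (Nd 12 [(Nd 21 [(Nd 7 [(Nd 10 [(Nd 34 [(Nd 20 [(Nd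 35 [(Nd 5 [(Nd 26 [(Nd 4 [(Nd 30 [(Nd 24 [(Nd 33 [(Nd 38 [(Nd 25 [(Nd 23 [(Nd 32 [(Lf 3)])])])])])])])])])])])])])])])])])])])])])])])]), (Nd 20 [(Nd 29 [(Nd 31 [(Nd 16 [(Nd 7 [(Nd 22 [(Nd 24 [(Nd 23 [(Lf 12)])])])])])])])])]), (Nd 38 [(Nd 11 [(Nd 18 [(Nd 37 [(Nd 12 [(Nd 23 [(Nd 20 [(Nd 31 [(Nd 16 [(Nd 7 [(Nd 22 [(Lf 15)])])])])])])])])]), (Nd 18 [(Nd 16 [(Nd 12 [(Nd 23 [(Nd 25 [(Nd 28 [(Nd 7 [(Nd 22 [(Nd 31 [(Lf 15)])])])])])])])])])])])])])])]), (Nd 31 [(Nd 11 [(Nd 17 [(Nd 16 [(Nd 21 [(Nd 36 [(Nd 37 [(Nd 3 [(Nd 12 [(Nd 22 [(Lf 15)])])])])])])]), (Nd 16 [(Nd 36 [(Nd 18 [(Nd 3 [(Nd 21 [(Nd 35 [(Nd 6 [(Nd 7 [(Nd 15 [(Nd 27 [(Nd 22 [(Nd 13 [(Nd 25 [(Nd 24 [(Nd 5 [(Nd 8 [(Nd 9 [(Nd 10 [(Nd 14 [(Nd 32 [(Nd 34 [(Nd 20 [(Nd 28 [(Nd 26 [(Nd 4 [(Lf 33)])])])])])])])])])])])])])])])])])])])])])])]), (Nd 20 [(Nd 7 [(Nd 21 [(Nd 37 [(Nd 9 [(Nd 23 [(Nd 15 [(Nd 22 [(Nd 24 [(Lf 12)])])])])])])])])])])])]),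 (Nd 18 [(Nd 16 [(Nd 21 [(Nd 12 [(Nd 22 [(Nd 23 [(Lf 9)])])])])]), (Nd 16 [(Nd 36 [(Nd 3 [(Nd 15 [(Nd 27 [(Nd 13 [(Nd 17 [(Nd 25 [(Nd 35 [(Nd 6 [(Nd 22 [(Nd 24 [(Nd 8 [(Nd 9 [(Nd 28 [(Nd 10 [(Nd 14 [(Nd 32 [(Nd 34 [(Nd 20 [(Nd 26 [(Nd 4 [(Lf 33)])])])])])])])])])])])])])])])])])])])]), (Nd 20 [(Nd 7 [(Nd 21 [(Nd 9 [(Nd 23 [(Nd 37 [(Nd 12 [(Nd 24 [(Lf 15)])])])])])])])])])])])]), (Nd 11 [(Nd 17 [(Nd 15 [(Nd 38 [(Nd 22 [(Nd 37 [(Nd 18 [(Nd 3 [(Nd 32 [(Nd 23 [(Lf 9)])])])])]), (Nd 27 [(Nd 37 [(Nd 16 [(Nd 23 [(Nd 13 [(Nd 21 [(Nd 36 [(Lf 33)])])])])])])])])])]), (Nd 36 [(Nd 21 [(Nd 33 [(Nd 27 [(Nd 13 [(Nd 8 [(Nd 38 [(Nd 22 [(Nd 16 [(Nd 18 [(Nd 35 [(Nd 5 [(Nd 6 [(Nd 24 [(Nd 7 [(Nd 9 [(Nd 28 [(Nd 10 [(Nd 15 [(Nd 14 [(Nd 32 [(Nd 34 [(Nd 4 [(Lf 26)])])])])])])])])])])])])])])]), (Nd 28 [(Nd 32 [(Nd 34 [(Nd 4 [(Nd 3 [(Nd 25 [(Nd 35 [(Lf 6)])])])])])])])])])])])])])]),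 (Nd 18 [(Nd 20 [(Nd 35 [(Nd 9 [(Nd 15 [(Nd 29 [(Nd 22 [(Nd 37 [(Nd 10 [(Nd 33 [(Nd 24 [(Nd 12 [(Nd 27 [(Nd 34 [(Nd 38 [(Nd 25 [(Nd 23 [(Nd 32 [(Lf 3)])])])])]), (Nd 23 [(Nd 32 [(Lf 3)])])])])])])])])])])])])])])])])]), (Nd 3 [(Nd 32 [(Nd 13 [(Nd 17 [(Nd 15 [(Nd 38 [(Nd 22 [(Nd 37 [(Nd 23 [(Lf 12)])]), (Nd 27 [(Nd 37 [(Nd 16 [(Nd 23 [(Nd 34 [(Nd 21 [(Nd 36 [(Nd 25 [(Nd 24 [(Nd 28 [(Nd 35 [(Nd 18 [(Nd 5 [(Lf 33)])])])])])])])])])])])])])])])]), (Nd 36 [(Nd 23 [(Nd 16 [(Nd 9 [(Nd 28 [(Nd 22 [(Nd 10 [(Nd 34 [(Lf 14)])]), (Nd 27 [(Nd 37 [(Nd 12 [(Nd 21 [(Nd 10 [(Nd 24 [(Nd 25 [(Nd 5 [(Lf 38)])])])])])])])])])])])]), (Nd 35 [(Nd 27 [(Nd 34 [(Nd 28 [(Nd 22 [(Lf 14)])])]), (Nd 34 [(Nd 5 [(Lf 33)])])])])]), (Nd 20 [(Nd 9 [(Nd 18 [(Nd 23 [(Nd 35 [(Nd 7 [(Nd 21 [(Nd 15 [(Nd 29 [(Nd 22 [(Nd 24 [(Nd 27 [(Nd 37 [(Nd 34 [(Nd 12 [(Nd 25 [(Lf 38)])])])])])])])])])])])])])])])])])])]),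 (Nd 28 [(Nd 22 [(Nd 6 [(Nd 35 [(Nd 10 [(Nd 24 [(Nd 34 [(Nd 9 [(Nd 36 [(Nd 15 [(Nd 14 [(Nd 17 [(Nd 13 [(Lf 25)])])])])])])])])])])]), (Nd 10 [(Nd 24 [(Nd 30 [(Nd 4 [(Nd 25 [(Nd 16 [(Nd 17 [(Nd 18 [(Lf 12)])])])])])]), (Nd 6 [(Nd 29 [(Nd 36 [(Nd 27 [(Nd 34 [(Nd 9 [(Nd 18 [(Nd 37 [(Nd 17 [(Nd 35 [(Nd 5 [(Lf 33)])])])])])])]), (Nd 21 [(Nd 12 [(Nd 17 [(Nd 37 [(Nd 16 [(Nd 25 [(Nd 23 [(Nd 13 [(Nd 5 [(Lf 38)])])])])])])])])])]), (Nd 17 [(Nd 18 [(Lf 12)])])])])])])])])])]), (Nd 36 [(Nd 27 [(Nd 13 [(Nd 35 [(Nd 8 [(Nd 18 [(Nd 38 [(Nd 17 [(Nd 25 [(Nd 22 [(Nd 16 [(Nd 6 [(Nd 10 [(Nd 15 [(Nd 24 [(Nd 9 [(Nd 28 [(Nd 14 [(Nd 32 [(Nd 34 [(Nd 4 [(Lf 26)])])])])])])])])])])]), (Nd 28 [(Nd 32 [(Nd 34 [(Lf 6)])])])])])])])])])])]), (Nd 9 [(Nd 15 [(Nd 33 [(Nd 38 [(Nd 25 [(Nd 4 [(Nd 29 [(Nd 22 [(Nd 37 [(Nd 17 [(Nd 18 [(Nd 16 [(Lf 26)])])])]), (Nd 16 [(Nd 21 [(Nd 28 [(Nd 5 [(Nd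 35 [(Nd 13 [(Nd 37 [(Lf 6)])])])])])])])])])])])])])])])]), (Nd 9 [(Nd 18 [(Nd 15 [(Nd 17 [(Nd 29 [(Nd 22 [(Nd 27 [(Nd 37 [(Nd 10 [(Nd 34 [(Nd 20 [(Nd 35 [(Nd 33 [(Nd 4 [(Nd 25 [(Lf 38)])])])])])])])])])])])])])])])])])])])]"
definition D0 where "D0 = assign Aadj 2 2 (assign Aadj 1 1 (assign Aadj 0 0 (replicate 39 [0,1,2,3])))"

lemma check_Tr: "check Aadj Tr D0"
  by code_simp

lemma len_D0: "length D0 = 39"
  by code_simp

lemma Vs_len: "length Vs = 39" by (simp add: Vs_def)

lemma mem_N_bases: "set xs \<in> N_bases \<longleftrightarrow>
   list_all (\<lambda>x. 1 \<le> x \<and> x \<le> 9) xs \<and> card (set xs) = 3 \<and> set xs \<notin> nonpappus_lines"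
  unfolding N_bases_def rank3_bases_def by (auto simp: list_all_iff)

lemma Vs_bases: "list_all (\<lambda>xs. set xs \<in> N_bases) Vs"
  unfolding mem_N_bases nonpappus_lines_def Vs_def by code_simp

lemma Vs_adj: "list_all (\<lambda>i. list_all (\<lambda>j. j < 39 \<and> set (Vs!i) \<inter> set (Vs!j) = {}) (Aadj!i)) [0..<39]"
  unfolding Vs_def Aadj_def by code_simp

lemma four_pigeon:
  fixes y z a b d :: nat
  assumes "y < 4" "z < 4" "a < 4" "b < 4" "d < 4" "a \<noteq> b" "a \<noteq> d" "b \<noteq> d"
    "y \<noteq> a" "y \<noteq> b" "y \<noteq> d" "z \<noteq> a" "z \<noteq> b" "z \<noteq> d"
  shows "y = z"
proof -
  have "y \<in> {0,1,2,3}" "z \<in> {0,1,2,3}" "a \<in> {0,1,2,3}" "b \<in> {0,1,2,3}" "d \<in> {0,1,2,3}"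
    using assms(1-5) by auto
  then show ?thesis using assms(6-) by auto
qed

lemma N_not4: "\<not> kneser_colorable N_bases 4"
proof
  assume "kneser_colorable N_bases 4"
  then obtain c :: "nat set \<Rightarrow> nat" where c1: "\<forall>B\<in>N_bases. c B < 4"
    and c2: "\<forall>B1\<in>N_bases. \<forall>B2\<in>N_bases. B1 \<inter> B2 = {} \<longrightarrow> c B1 \<noteq> c B2"
    unfolding kneser_colorable_def by blast
  define f where "f i = c (set (Vs!i))" for i
  have base: "\<And>i. i < 39 \<Longrightarrow> set (Vs!i) \<in> N_bases"
  proof -
    fix i :: nat assume "i < 39"
    then have "Vs!i \<in> set Vs" using Vs_len by (simp add: nth_mem)
    then show "set (Vs!i) \<in> N_bases" using Vs_bases by (simp add: list_all_iff)
  qed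
  have adj: "\<And>i j. i < 39 \<Longrightarrow> j \<in> set (Aadj!i) \<Longrightarrow> j < 39 \<and> set (Vs!i) \<inter> set (Vs!j) = {}"
    using Vs_adj by (auto simp: list_all_iff)
  have f4: "\<And>i. i < 39 \<Longrightarrow> f i < 4" using base c1 f_def by auto
  have fp: "\<And>i j. i < 39 \<Longrightarrow> j \<in> set (Aadj!i) \<Longrightarrow> f i \<noteq> f j"
  proof -
    fix i j assume "i < 39" "j \<in> set (Aadj!i)"
    with adj base have "set (Vs!i) \<in> N_bases" "set (Vs!j) \<in> N_bases" "set (Vs!i) \<inter> set (Vs!j) = {}"
      by auto
    with c2 show "f i \<noteq> f j" unfolding f_def by blast
  qed
  have a01: "1 \<in> set (Aadj!0)" "2 \<in> set (Aadj!0)" "2 \<in> set (Aadj!1)"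
    by (simp_all add: Aadj_def)
  have d: "f 0 \<noteq> f 1" "f 0 \<noteq> f 2" "f 1 \<noteq> f 2"
    using fp[OF _ a01(1)] fp[OF _ a01(2)] fp[OF _ a01(3)] by auto
  define \<pi> where "\<pi> y = (if y = f 0 then 0 else if y = f 1 then 1 else if y = f 2 then 2 else (3::nat))" for y
  have f0: "f 0 < 4" "f 1 < 4" "f 2 < 4" using f4 by auto
  have pinj: "\<pi> y \<noteq> \<pi> z" if yz: "y < 4" "z < 4" "y \<noteq> z" for y z
  proof
    assume eq: "\<pi> y = \<pi> z"
    have fp3: "y = z" if "y \<noteq> f 0" "y \<noteq> f 1" "y \<noteq> f 2" "z \<noteq> f 0" "z \<noteq> f 1" "z \<noteq> f 2"
      using four_pigeon[of y z "f 0" "f 1" "f 2"] yz f0 d that by blast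
    from eq yz(3) fp3 show False unfolding \<pi>_def by (auto split: if_splits)
  qed
  define g where "g i = \<pi> (f i)" for i
  have g4: "\<And>i. g i < 4" unfolding g_def \<pi>_def by auto
  have gp: "proper Aadj g 39"
    unfolding proper_def
  proof (intro allI impI ballI)
    fix v u assume h: "v < 39" "u \<in> set (Aadj!v)" "u < 39"
    then have "f v \<noteq> f u" "f u < 4" "f v < 4" using fp f4 by auto
    then show "g u \<noteq> g v" unfolding g_def using pinj by metis
  qed
  have g012: "g 0 = 0" "g 1 = 1" "g 2 = 2" unfolding g_def \<pi>_def using d by auto
  have "cons_ok g (replicate 39 [0,1,2,3])"
    unfolding cons_ok_def using g4 by (auto simp: less_Suc_eq numeral_eq_Suc)
  moreover have "proper Aadj g (length (replicate 39 [0,1,2,3::nat]))" using gp by simp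
  ultimately have "cons_ok g (assign Aadj 0 0 (replicate 39 [0,1,2,3]))
      \<and> length (assign Aadj 0 0 (replicate 39 [0,1,2,3])) = 39"
    using assign_ok[of g _ Aadj 0 0] g012 by auto
  then have "cons_ok g (assign Aadj 1 1 (assign Aadj 0 0 (replicate 39 [0,1,2,3])))
      \<and> length (assign Aadj 1 1 (assign Aadj 0 0 (replicate 39 [0,1,2,3]))) = 39"
    using assign_ok[of g _ Aadj 1 1] g012 gp by auto
  then have "cons_ok g D0 \<and> length D0 = 39"
    unfolding D0_def using assign_ok[of g _ Aadj 2 2] g012 gp by auto
  then show False using check_sound'[OF check_Tr, of g] gp by auto
qed

lemma card_disj_bound:
  assumes "B1 \<subseteq> S" "B2 \<subseteq> S" "card B1 = 3" "card B2 = 3" "B1 \<inter> B2 = {}" "finite S" "card S = 5"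
  shows False
proof -
  have "finite B1" "finite B2" using assms finite_subset by auto
  then have "card (B1 \<union> B2) = 6" using assms card_Un_disjoint by fastforce
  moreover have "card (B1 \<union> B2) \<le> 5" using assms card_mono[of S "B1 \<union> B2"] by auto
  ultimately show False by simp
qed

lemma sub_ge:
  fixes B :: "nat set"
  assumes "B \<subseteq> {1..n}" "\<forall>i. 1 \<le> i \<and> i < k \<longrightarrow> i \<notin> B"
  shows "B \<subseteq> {k..n}"
proof
  fix x assume "x \<in> B"
  with assms have "1 \<le> x" "x \<le> n" by auto
  with assms(2) \<open>x \<in> B\<close> have "\<not> x < k" by blast
  with \<open>x \<le> n\<close> show "x \<in> {k..n}" by simp
qed

lemma F7_col3: "kneser_colorable F7_bases 3"
proof -
  define col where "col B = (if (1::nat) \<in> B then 0 else if 2 \<in> B then 1 else (2::nat))" for B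
  have c0: "col B = 0 \<longleftrightarrow> 1 \<in> B" for B unfolding col_def by simp
  have c1: "col B = 1 \<longleftrightarrow> 1 \<notin> B \<and> 2 \<in> B" for B unfolding col_def by simp
  have c2: "col B = 2 \<longleftrightarrow> 1 \<notin> B \<and> 2 \<notin> B" for B unfolding col_def by simp
  have r: "col B < 3" for B unfolding col_def by simp
  have "col B1 \<noteq> col B2" if h: "B1 \<in> F7_bases" "B2 \<in> F7_bases" "B1 \<inter> B2 = {}" for B1 B2
  proof
    assume e: "col B1 = col B2"
    have s: "B1 \<subseteq> {1..7}" "B2 \<subseteq> {1..7}" "card B1 = 3" "card B2 = 3"
      using h unfolding F7_bases_def rank3_bases_def by auto
    have "col B1 = 0 \<or> col B1 = 1 \<or> col B1 = 2" using r[of B1] by linarith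
    then show False
    proof (elim disjE)
      assume "col B1 = 0" then have "1 \<in> B1" "1 \<in> B2" using e c0[of B1] c0[of B2] by simp_all
      then show False using h(3) by blast
    next
      assume "col B1 = 1" then have "2 \<in> B1" "2 \<in> B2" using e c1[of B1] c1[of B2] by simp_all
      then show False using h(3) by blast
    next
      assume a: "col B1 = 2"
      then have "\<forall>i. 1 \<le> i \<and> i < 3 \<longrightarrow> i \<notin> B1" "\<forall>i. 1 \<le> i \<and> i < 3 \<longrightarrow> i \<notin> B2"
        using e c2[of B1] c2[of B2] by (auto simp: less_Suc_eq numeral_eq_Suc)
      then have "B1 \<subseteq> {3..7}" "B2 \<subseteq> {3..7}" using sub_ge s by blast+
      then show False using card_disj_bound[of B1 "{3..7}" B2] s h(3) by simp
    qed
  qed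
  then show ?thesis unfolding kneser_colorable_def using r by blast
qed

lemma N_col5: "kneser_colorable N_bases 5"
proof -
  define col where "col B = (if (1::nat) \<in> B then 0 else if 2 \<in> B then 1 else if 3 \<in> B then 2
     else if 4 \<in> B then 3 else (4::nat))" for B
  have c0: "col B = 0 \<longleftrightarrow> 1 \<in> B" for B unfolding col_def by simp
  have c1: "col B = 1 \<longleftrightarrow> 1 \<notin> B \<and> 2 \<in> B" for B unfolding col_def by simp
  have c2: "col B = 2 \<longleftrightarrow> 1 \<notin> B \<and> 2 \<notin> B \<and> 3 \<in> B" for B unfolding col_def by simp
  have c3: "col B = 3 \<longleftrightarrow> 1 \<notin> B \<and> 2 \<notin> B \<and> 3 \<notin> B \<and> 4 \<in> B" for B unfolding col_def by simp
  have c4: "col B = 4 \<longleftrightarrow> 1 \<notin> B \<and> 2 \<notin> B \<and> 3 \<notin> B \<and> 4 \<notin> B" for B unfolding col_def by simp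
  have r: "col B < 5" for B unfolding col_def by simp
  have "col B1 \<noteq> col B2" if h: "B1 \<in> N_bases" "B2 \<in> N_bases" "B1 \<inter> B2 = {}" for B1 B2
  proof
    assume e: "col B1 = col B2"
    have s: "B1 \<subseteq> {1..9}" "B2 \<subseteq> {1..9}" "card B1 = 3" "card B2 = 3"
      using h unfolding N_bases_def rank3_bases_def by auto
    have "col B1 = 0 \<or> col B1 = 1 \<or> col B1 = 2 \<or> col B1 = 3 \<or> col B1 = 4" using r[of B1] by linarith
    then show False
    proof (elim disjE)
      assume "col B1 = 0" then have "1 \<in> B1" "1 \<in> B2" using e c0[of B1] c0[of B2] by simp_all
      then show False using h(3) by blast
    next
      assume "col B1 = 1" then have "2 \<in> B1" "2 \<in> B2" using e c1[of B1] c1[of B2] by simp_all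
      then show False using h(3) by blast
    next
      assume "col B1 = 2" then have "3 \<in> B1" "3 \<in> B2" using e c2[of B1] c2[of B2] by simp_all
      then show False using h(3) by blast
    next
      assume "col B1 = 3" then have "4 \<in> B1" "4 \<in> B2" using e c3[of B1] c3[of B2] by simp_all
      then show False using h(3) by blast
    next
      assume a: "col B1 = 4"
      then have "\<forall>i. 1 \<le> i \<and> i < 5 \<longrightarrow> i \<notin> B1" "\<forall>i. 1 \<le> i \<and> i < 5 \<longrightarrow> i \<notin> B2"
        using e c4[of B1] c4[of B2] by (auto simp: less_Suc_eq numeral_eq_Suc)
      then have "B1 \<subseteq> {5..9}" "B2 \<subseteq> {5..9}" using sub_ge s by blast+
      then show False using card_disj_bound[of B1 "{5..9}" B2] s h(3) by simp
    qed
  qed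
  then show ?thesis unfolding kneser_colorable_def using r by blast
qed

lemma mem_F7: "set xs \<in> F7_bases \<longleftrightarrow>
   list_all (\<lambda>x. 1 \<le> x \<and> x \<le> 7) xs \<and> card (set xs) = 3 \<and> set xs \<notin> fano_lines"
  unfolding F7_bases_def rank3_bases_def by (auto simp: list_all_iff)

lemma F7_cyc: "(set [1,2,4]) \<in> F7_bases" "(set [3,5,7]) \<in> F7_bases" "(set [1,2,6]) \<in> F7_bases" "(set [3,4,5]) \<in> F7_bases" "(set [2,6,7]) \<in> F7_bases" "(set [1,3,4]) \<in> F7_bases" "(set [5,6,7]) \<in> F7_bases"
  unfolding mem_F7 fano_lines_def by code_simp+

lemma F7_not2: "\<not> kneser_colorable F7_bases 2"
proof
  assume "kneser_colorable F7_bases 2"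
  then obtain c :: "nat set \<Rightarrow> nat" where c1: "\<forall>B\<in>F7_bases. c B < 2"
    and c2: "\<forall>B1\<in>F7_bases. \<forall>B2\<in>F7_bases. B1 \<inter> B2 = {} \<longrightarrow> c B1 \<noteq> c B2"
    unfolding kneser_colorable_def by blast
  note m = F7_cyc
  have n0: "c (set [1,2,4]) \<noteq> c (set [3,5,7])" by (rule c2[rule_format, OF m(1) m(2)]) simp
  have n1: "c (set [3,5,7]) \<noteq> c (set [1,2,6])" by (rule c2[rule_format, OF m(2) m(3)]) simp
  have n2: "c (set [1,2,6]) \<noteq> c (set [3,4,5])" by (rule c2[rule_format, OF m(3) m(4)]) simp
  have n3: "c (set [3,4,5]) \<noteq> c (set [2,6,7])" by (rule c2[rule_format, OF m(4) m(5)]) simp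
  have n4: "c (set [2,6,7]) \<noteq> c (set [1,3,4])" by (rule c2[rule_format, OF m(5) m(6)]) simp
  have n5: "c (set [1,3,4]) \<noteq> c (set [5,6,7])" by (rule c2[rule_format, OF m(6) m(7)]) simp
  have n6: "c (set [5,6,7]) \<noteq> c (set [1,2,4])" by (rule c2[rule_format, OF m(7) m(1)]) simp
  have "c (set [1,2,4]) < 2" "c (set [3,5,7]) < 2" "c (set [1,2,6]) < 2" "c (set [3,4,5]) < 2" "c (set [2,6,7]) < 2" "c (set [1,3,4]) < 2" "c (set [5,6,7]) < 2" using c1 m by blast+
  then show False using n0 n1 n2 n3 n4 n5 n6 by linarith
qed

theorem proposition4p7:
  shows "kneser_chromatic_number F7_bases = 3 \<and> kneser_chromatic_number N_bases = 5"
  using kcn_eq[OF F7_col3] kcn_eq[OF N_col5] F7_not2 N_not4 by simp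

end
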